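(* Let $\mathbf{c}\in\mathbb{R}^n_{\ge0}$, $0<r\le1$ with $\|\mathbf{c}\|_1\le r$, let $0<\delta\le1$ and $M=\lceil 4n^2\delta^{-1}\rceil$. Then $$\Psi_n(1,r)\le G_n(1,r)\le(1+\delta)\Psi_n(1,r).$$
   Context: Given $\mathbf{c}=(c_1,\dots,c_n)$, define $\Psi_0(u,v)=1$ if $u\ge0$ and $v\ge0$, and $0$ otherwise, and for $i=1,\dots,n$, $\Psi_i(u,v)=\int_{-1}^1\Psi_{i-1}(u-|s|,\,v-|s-c_i|)\,ds$. Given additionally $r>0$ and a positive integer $M$, define $G_0=\Psi_0$ and, inductively for $i=1,\dots,n$: $\overline G_i(u,v)=\int_{-1}^1G_{i-1}(u-|s|,\,v-|s-c_i|)\,ds$, and $G_i(u,v)=\overline G_i\big(\tfrac1M\lceil Mu\rceil,\ \tfrac rM\lceil \tfrac Mr v\rceil\big)$ if $u>0$ and $v>0$, while $G_i(u,v)=0$ otherwise (a staircase approximation of $\overline G_i$ on the grid $\tfrac1M\mathbb{Z}\times\tfrac rM\mathbb{Z}$). *)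

theory Defs
  imports "HOL-Analysis.Analysis"
begin

text \<open>The vector c = (c_1,...,c_n) is represented by a function c :: nat => real,
  of which only the values c 1, ..., c n are used.\<close>

fun Psi :: "(nat \<Rightarrow> real) \<Rightarrow> nat \<Rightarrow> real \<Rightarrow> real \<Rightarrow> real" where
  "Psi c 0 u v = (if u \<ge> 0 \<and> v \<ge> 0 then 1 else 0)"
| "Psi c (Suc i) u v =
     integral {-1..1} (\<lambda>s. Psi c i (u - \<bar>s\<bar>) (v - \<bar>s - c (Suc i)\<bar>))"

fun G :: "(nat \<Rightarrow> real) \<Rightarrow> real \<Rightarrow> nat \<Rightarrow> nat \<Rightarrow> real \<Rightarrow> real \<Rightarrow> real" where
  "G c r M 0 u v = Psi c 0 u v"
| "G c r M (Suc i) u v =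
     (if u > 0 \<and> v > 0 then
        (let u' = of_int \<lceil>real M * u\<rceil> / real M;
             v' = r / real M * of_int \<lceil>real M / r * v\<rceil>
         in integral {-1..1} (\<lambda>s. G c r M i (u' - \<bar>s\<bar>) (v' - \<bar>s - c (Suc i)\<bar>)))
      else 0)"

end

theory Submission
  imports Defs
begin


definition MB :: "(real \<Rightarrow> real \<Rightarrow> real) \<Rightarrow> bool" where
  "MB F \<longleftrightarrow> (\<lambda>z. F (fst z) (snd z)) \<in> borel_measurable borel \<and> (\<exists>K. \<forall>x y. \<bar>F x y\<bar> \<le> K)"

lemma MB_comp_meas:
  assumes "MB F" and g: "g \<in> borel_measurable N" and h: "h \<in> borel_measurable N"
  shows "(\<lambda>s. F (g s) (h s)) \<in> borel_measurable N"
proof -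
  have m: "(\<lambda>z. F (fst z) (snd z)) \<in> borel_measurable borel" using assms(1) MB_def by blast
  have "(\<lambda>s. (g s, h s)) \<in> measurable N (borel \<Otimes>\<^sub>M borel)"
    using g h by measurable
  then have "(\<lambda>s. (g s, h s)) \<in> measurable N borel"
    by (simp add: borel_prod)
  from measurable_compose[OF this m] show ?thesis by simp
qed

lemma MB_set_integrable:
  assumes "MB F" and g: "g \<in> borel_measurable borel" and h: "h \<in> borel_measurable borel"
  shows "set_integrable lborel {a..b::real} (\<lambda>s. F (g s) (h s))"
proof -
  obtain K where K: "\<forall>x y. \<bar>F x y\<bar> \<le> K" using assms(1) MB_def by blast
  have m[measurable]: "(\<lambda>s. F (g s) (h s)) \<in> borel_measurable borel" by (rule MB_comp_meas[OF assms])
  show ?thesis unfolding set_integrable_def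
    apply (rule integrableI_bounded_set[where A="{a..b}" and B=K])
    using K by (auto simp: indicator_def emeasure_lborel_Icc_eq)
qed

lemma MB_integrable_on:
  assumes "MB F" and g: "g \<in> borel_measurable borel" and h: "h \<in> borel_measurable borel"
  shows "(\<lambda>s. F (g s) (h s)) integrable_on {a..b::real}"
proof -
  have "set_integrable lborel {a..b::real} (\<lambda>s. F (g s) (h s))" by (rule MB_set_integrable[OF assms])
  then have "set_integrable lebesgue {a..b::real} (\<lambda>s. F (g s) (h s))"
    unfolding set_integrable_def
    by (subst integrable_completion) (auto intro!: borel_measurable_integrable)
  thus ?thesis by (rule set_lebesgue_integral_eq_integral(1))
qed

lemma MB_integral_eq:
  assumes "MB F" and g: "g \<in> borel_measurable borel" and h: "h \<in> borel_measurable borel"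
  shows "integral {a..b::real} (\<lambda>s. F (g s) (h s)) = (LINT s:{a..b}|lborel. F (g s) (h s))"
proof -
  have m[measurable]: "(\<lambda>s. F (g s) (h s)) \<in> borel_measurable borel" by (rule MB_comp_meas[OF assms])
  have "set_integrable lborel {a..b::real} (\<lambda>s. F (g s) (h s))" by (rule MB_set_integrable[OF assms])
  then have "set_integrable lebesgue {a..b::real} (\<lambda>s. F (g s) (h s))"
    unfolding set_integrable_def
    by (subst integrable_completion) (auto intro!: borel_measurable_integrable)
  then have "integral {a..b::real} (\<lambda>s. F (g s) (h s)) = (LINT s:{a..b}|lebesgue. F (g s) (h s))"
    by (simp add: set_lebesgue_integral_eq_integral(2))
  also have "\<dots> = (LINT s:{a..b}|lborel. F (g s) (h s))"
    unfolding set_lebesgue_integral_def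
    by (rule integral_completion) (use m in measurable)
  finally show ?thesis .
qed

lemma MB_step:
  assumes "MB F"
  shows "MB (\<lambda>u v. integral {-1..1} (\<lambda>s. F (u - \<bar>s\<bar>) (v - \<bar>s - a\<bar>)))"
proof -
  obtain K where K: "\<forall>x y. \<bar>F x y\<bar> \<le> K" using assms(1) MB_def by blast
  have m: "(\<lambda>z. F (fst z) (snd z)) \<in> borel_measurable borel" using assms(1) MB_def by blast
  have pm: "(\<lambda>p::(real\<times>real)\<times>real. (fst (fst p) - \<bar>snd p\<bar>, snd (fst p) - \<bar>snd p - a\<bar>))
      \<in> measurable ((borel \<Otimes>\<^sub>M borel) \<Otimes>\<^sub>M borel) (borel \<Otimes>\<^sub>M borel)"
    by measurable
  have pm': "(\<lambda>p::(real\<times>real)\<times>real. (fst (fst p) - \<bar>snd p\<bar>, snd (fst p) - \<bar>snd p - a\<bar>))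
      \<in> measurable (borel \<Otimes>\<^sub>M lborel) borel"
  proof -
    have e1: "(borel \<Otimes>\<^sub>M borel :: ((real\<times>real)\<times>real) measure) = borel" by (rule borel_prod)
    have e2: "(borel \<Otimes>\<^sub>M borel :: (real\<times>real) measure) = borel" by (rule borel_prod)
    have "(\<lambda>p::(real\<times>real)\<times>real. (fst (fst p) - \<bar>snd p\<bar>, snd (fst p) - \<bar>snd p - a\<bar>))
      \<in> measurable (borel \<Otimes>\<^sub>M borel) borel" using pm unfolding e2 .
    then show ?thesis
      by (subst measurable_cong_sets[OF sets_pair_measure_cong[OF refl sets_lborel] refl])
  qed
  have cm[measurable]: "(\<lambda>p::(real\<times>real)\<times>real. F (fst (fst p) - \<bar>snd p\<bar>) (snd (fst p) - \<bar>snd p - a\<bar>))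
      \<in> borel_measurable (borel \<Otimes>\<^sub>M lborel)"
    using measurable_compose[OF pm' m] by simp
  have "(\<lambda>z::real\<times>real. LINT s:{-1..1}|lborel. F (fst z - \<bar>s\<bar>) (snd z - \<bar>s - a\<bar>)) \<in> borel_measurable borel"
    unfolding set_lebesgue_integral_def
    by (rule lborel.borel_measurable_lebesgue_integral) (simp add: case_prod_beta')
  moreover have "\<And>z. integral {-1..1} (\<lambda>s. F (fst z - \<bar>s\<bar>) (snd z - \<bar>s - a\<bar>))
     = (LINT s:{-1..1}|lborel. F (fst z - \<bar>s\<bar>) (snd z - \<bar>s - a\<bar>))"
    by (rule MB_integral_eq[OF assms]) auto
  ultimately have meas: "(\<lambda>z::real\<times>real. integral {-1..1} (\<lambda>s. F (fst z - \<bar>s\<bar>) (snd z - \<bar>s - a\<bar>))) \<in> borel_measurable borel"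
    by simp
  have bd: "\<bar>integral {-1..1} (\<lambda>s. F (u - \<bar>s\<bar>) (v - \<bar>s - a\<bar>))\<bar> \<le> 2 * K" for u v
  proof -
    have i: "(\<lambda>s. F (u - \<bar>s\<bar>) (v - \<bar>s - a\<bar>)) integrable_on {-1..1::real}"
      by (rule MB_integrable_on[OF assms]) auto
    have "norm (integral {-1..1} (\<lambda>s. F (u - \<bar>s\<bar>) (v - \<bar>s - a\<bar>))) \<le> integral {-1..1::real} (\<lambda>s. K)"
      by (rule integral_norm_bound_integral[OF i]) (use K in auto)
    then show ?thesis by simp
  qed
  show ?thesis unfolding MB_def using meas bd by auto
qed

lemma MB_Psi: "MB (Psi c i)"
proof (induction i)
  case 0
  have "(\<lambda>z::real\<times>real. if fst z \<ge> 0 \<and> snd z \<ge> 0 then 1 else (0::real)) \<in> borel_measurable (borel \<Otimes>\<^sub>M borel)"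
    by measurable
  then have "(\<lambda>z::real\<times>real. if fst z \<ge> 0 \<and> snd z \<ge> 0 then 1 else (0::real)) \<in> borel_measurable borel"
    by (simp add: borel_prod)
  then show ?case unfolding MB_def by (auto intro!: exI[of _ 1])
next
  case (Suc i)
  have "MB (\<lambda>u v. integral {-1..1} (\<lambda>s. Psi c i (u - \<bar>s\<bar>) (v - \<bar>s - c (Suc i)\<bar>)))"
    by (rule MB_step[OF Suc])
  moreover have "Psi c (Suc i) = (\<lambda>u v. integral {-1..1} (\<lambda>s. Psi c i (u - \<bar>s\<bar>) (v - \<bar>s - c (Suc i)\<bar>)))"
    by (auto simp: fun_eq_iff)
  ultimately show ?case by simp
qed

definition Gbar where "Gbar c r M i = (\<lambda>u v. integral {-1..1} (\<lambda>s. G c r M i (u - \<bar>s\<bar>) (v - \<bar>s - c (Suc i)\<bar>)))"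

lemma G_Suc': "G c r M (Suc i) u v = (if u > 0 \<and> v > 0 then
   Gbar c r M i (of_int \<lceil>real M * u\<rceil> / real M) (r / real M * of_int \<lceil>real M / r * v\<rceil>) else 0)"
  by (simp add: Gbar_def Let_def)

lemma MB_G: "MB (G c r M i)"
proof (induction i)
  case 0
  have "(\<lambda>z::real\<times>real. if fst z \<ge> 0 \<and> snd z \<ge> 0 then 1 else (0::real)) \<in> borel_measurable (borel \<Otimes>\<^sub>M borel)"
    by measurable
  then have "(\<lambda>z::real\<times>real. if fst z \<ge> 0 \<and> snd z \<ge> 0 then 1 else (0::real)) \<in> borel_measurable borel"
    by (simp add: borel_prod)
  then show ?case unfolding MB_def by (auto intro!: exI[of _ 1])
next
  case (Suc i)
  have mb: "MB (Gbar c r M i)" unfolding Gbar_def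
    by (rule MB_step[OF Suc])
  obtain K where K: "\<forall>x y. \<bar>Gbar c r M i x y\<bar> \<le> K" using mb MB_def by blast
  have [measurable]: "(\<lambda>z::real\<times>real. Gbar c r M i (of_int \<lceil>real M * fst z\<rceil> / real M) (r / real M * of_int \<lceil>real M / r * snd z\<rceil>))
     \<in> borel_measurable (borel \<Otimes>\<^sub>M borel)"
    by (rule MB_comp_meas[OF mb]) measurable
  have "(\<lambda>z::real\<times>real. if fst z > 0 \<and> snd z > 0 then Gbar c r M i (of_int \<lceil>real M * fst z\<rceil> / real M) (r / real M * of_int \<lceil>real M / r * snd z\<rceil>) else 0)
     \<in> borel_measurable (borel \<Otimes>\<^sub>M borel)"
    by measurable
  then have meas: "(\<lambda>z. G c r M (Suc i) (fst z) (snd z)) \<in> borel_measurable borel"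
    unfolding G_Suc' by (simp only: borel_prod)
  have bd: "\<bar>G c r M (Suc i) x y\<bar> \<le> max K 0" for x y
  proof (cases "x > 0 \<and> y > 0")
    case True
    have "\<bar>Gbar c r M i (real_of_int \<lceil>real M * x\<rceil> / real M) (r / real M * real_of_int \<lceil>real M / r * y\<rceil>)\<bar> \<le> K"
      using K by blast
    with True show ?thesis unfolding G_Suc' by simp
  next
    case False
    show ?thesis unfolding G_Suc' if_not_P[OF False] by simp
  qed
  show ?case unfolding MB_def using meas bd by blast
qed



lemma int_gen:
  assumes "MB F"
  shows "(\<lambda>s. F (u - \<bar>s\<bar>) (v - \<bar>s - a\<bar>)) integrable_on {x..y::real}"
  by (rule MB_integrable_on[OF assms]) auto

lemma Psi_nonneg: "0 \<le> Psi c i x y"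
proof (induction i arbitrary: x y)
  case (Suc i)
  show ?case by (simp del: Psi.simps add: Psi.simps(2)) (rule integral_nonneg[OF int_gen[OF MB_Psi]], use Suc in auto)
qed simp

lemma Psi_zero: "x < 0 \<or> y < 0 \<Longrightarrow> Psi c i x y = 0"
proof (induction i arbitrary: x y)
  case (Suc i)
  have "\<And>s. Psi c i (x - \<bar>s\<bar>) (y - \<bar>s - c (Suc i)\<bar>) = 0"
    using Suc.prems by (intro Suc.IH) auto
  then show ?case by simp
qed auto

lemma Psi_mono: "x \<le> x' \<Longrightarrow> y \<le> y' \<Longrightarrow> Psi c i x y \<le> Psi c i x' y'"
proof (induction i arbitrary: x y x' y')
  case (Suc i)
  show ?case unfolding Psi.simps(2)
    by (rule integral_le[OF int_gen[OF MB_Psi] int_gen[OF MB_Psi]]) (use Suc in auto)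
qed auto

lemma Psi_Suc_zero:
  assumes "\<not> (x > 0 \<and> y > 0)" shows "Psi c (Suc i) x y = 0"
proof -
  have Z: "\<forall>s\<in>{-1..1} - {0, c (Suc i)}. Psi c i (x - \<bar>s\<bar>) (y - \<bar>s - c (Suc i)\<bar>) = 0"
  proof
    fix s assume s: "s \<in> {-1..1} - {0, c (Suc i)}"
    have "x - \<bar>s\<bar> < 0 \<or> y - \<bar>s - c (Suc i)\<bar> < 0"
      using assms s by auto
    then show "Psi c i (x - \<bar>s\<bar>) (y - \<bar>s - c (Suc i)\<bar>) = 0" by (rule Psi_zero)
  qed
  have "integral {-1..1::real} (\<lambda>s. 0::real) = integral {-1..1} (\<lambda>s. Psi c i (x - \<bar>s\<bar>) (y - \<bar>s - c (Suc i)\<bar>))"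
    by (rule integral_spike[of "{0, c (Suc i)}"]) (use Z in \<open>auto intro: negligible_finite\<close>)
  then show ?thesis by simp
qed

lemma round_u:
  assumes "M > 0" shows "u \<le> of_int \<lceil>real M * u\<rceil> / real M" "of_int \<lceil>real M * u\<rceil> / real M \<le> u + 1 / real M"
proof -
  have "real M * u \<le> of_int \<lceil>real M * u\<rceil>" by linarith
  then show "u \<le> of_int \<lceil>real M * u\<rceil> / real M" using assms by (simp add: field_simps)
  have "of_int \<lceil>real M * u\<rceil> \<le> real M * u + 1" by linarith
  then show "of_int \<lceil>real M * u\<rceil> / real M \<le> u + 1 / real M" using assms by (simp add: field_simps)
qed

lemma round_v:
  assumes "M > 0" "r > 0" shows "v \<le> r / real M * of_int \<lceil>real M / r * v\<rceil>" "r / real M * of_int \<lceil>real M / r * v\<rceil> \<le> v + r / real M"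
proof -
  have a: "real M / r * v \<le> of_int \<lceil>real M / r * v\<rceil>" by linarith
  have "v = r / real M * (real M / r * v)" using assms by simp
  also have "\<dots> \<le> r / real M * of_int \<lceil>real M / r * v\<rceil>"
    using a assms by (intro mult_left_mono) auto
  finally show "v \<le> r / real M * of_int \<lceil>real M / r * v\<rceil>" .
  have b: "of_int \<lceil>real M / r * v\<rceil> \<le> real M / r * v + 1" by linarith
  have "r / real M * of_int \<lceil>real M / r * v\<rceil> \<le> r / real M * (real M / r * v + 1)"
    using b assms by (intro mult_left_mono) auto
  also have "\<dots> = v + r / real M" using assms by (simp add: field_simps)
  finally show "r / real M * of_int \<lceil>real M / r * v\<rceil> \<le> v + r / real M" .
qed

lemma lower:
  assumes "M > 0" "r > 0"
  shows "Psi c i u v \<le> G c r M i u v"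
proof (induction i arbitrary: u v)
  case (Suc i)
  show ?case
  proof (cases "u > 0 \<and> v > 0")
    case True
    let ?u = "of_int \<lceil>real M * u\<rceil> / real M" and ?v = "r / real M * of_int \<lceil>real M / r * v\<rceil>"
    have "Psi c (Suc i) u v \<le> Psi c (Suc i) ?u ?v"
      by (rule Psi_mono) (use round_u[OF assms(1)] round_v[OF assms] in auto)
    also have "\<dots> \<le> Gbar c r M i ?u ?v" unfolding Psi.simps(2) Gbar_def
      by (rule integral_le[OF int_gen[OF MB_Psi] int_gen[OF MB_G]]) (use Suc in auto)
    also have "\<dots> = G c r M (Suc i) u v" by (subst G_Suc') (simp only: if_P[OF True])
    finally show ?thesis .
  next
    case False
    then show ?thesis using Psi_Suc_zero[OF False] by (simp only: G_Suc' if_not_P[OF False]) simp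
  qed
qed simp

lemma upper:
  assumes "M > 0" "r > 0"
  shows "G c r M i u v \<le> Psi c i (u + real i / real M) (v + real i * r / real M)"
proof (induction i arbitrary: u v)
  case (Suc i)
  show ?case
  proof (cases "u > 0 \<and> v > 0")
    case True
    let ?u = "of_int \<lceil>real M * u\<rceil> / real M" and ?v = "r / real M * of_int \<lceil>real M / r * v\<rceil>"
    have "G c r M (Suc i) u v = Gbar c r M i ?u ?v" by (subst G_Suc') (simp only: if_P[OF True])
    also have "\<dots> \<le> integral {-1..1} (\<lambda>s. Psi c i (?u - \<bar>s\<bar> + real i / real M) (?v - \<bar>s - c (Suc i)\<bar> + real i * r / real M))"
      unfolding Gbar_def
      by (rule integral_le[OF int_gen[OF MB_G]]) (rule MB_integrable_on[OF MB_Psi], simp_all add: Suc)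
    also have "\<dots> = Psi c (Suc i) (?u + real i / real M) (?v + real i * r / real M)"
      by (simp add: algebra_simps)
    also have "\<dots> \<le> Psi c (Suc i) (u + real (Suc i) / real M) (v + real (Suc i) * r / real M)"
    proof (rule Psi_mono)
      have e1: "real (Suc i) / real M = 1 / real M + real i / real M" by (simp add: add_divide_distrib)
      have e2: "real (Suc i) * r / real M = r / real M + real i * r / real M" by (simp add: add_divide_distrib algebra_simps)
      show "?u + real i / real M \<le> u + real (Suc i) / real M" using round_u(2)[OF assms(1), of u] e1 by linarith
      show "?v + real i * r / real M \<le> v + real (Suc i) * r / real M" using round_v(2)[OF assms, of v] e2 by linarith
    qed
    finally show ?thesis .
  next
    case False
    show ?thesis by (simp only: G_Suc' if_not_P[OF False]) (rule Psi_nonneg)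
  qed
qed simp



lemma affine_int_le:
  fixes f :: "real \<Rightarrow> real"
  assumes mu: "\<mu> \<ge> 1" and hq: "\<bar>q\<bar> \<le> 1 - 1/\<mu>"
    and hi: "(\<lambda>s. f (s / \<mu> + q)) integrable_on {-1..1}"
    and fi: "f integrable_on {-1..1}"
    and nn: "\<And>x. 0 \<le> f x"
  shows "integral {-1..1} (\<lambda>s. f (s / \<mu> + q)) \<le> \<mu> * integral {-1..1} f"
proof -
  let ?h = "\<lambda>s. f (s / \<mu> + q)"
  let ?J = "integral {-1..1} ?h"
  have "(?h has_integral ?J) (cbox (-1) 1)" using hi by (simp add: integrable_integral)
  from has_integral_affinity[OF this, of \<mu> "-\<mu>*q"] mu
  have A: "((\<lambda>x. ?h (\<mu> * x + - (\<mu> * q))) has_integral (1 / \<mu>) * ?J) ((\<lambda>x. (1/\<mu>) * x + - ((1/\<mu>) * (- (\<mu> * q)))) ` cbox (-1) 1)"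
    by simp
  have e: "(\<lambda>x. ?h (\<mu> * x + - (\<mu> * q))) = f" using mu by (auto simp: fun_eq_iff field_simps)
  let ?S = "(\<lambda>x. (1/\<mu>) * x + - ((1/\<mu>) * (- (\<mu> * q)))) ` cbox (-1) (1::real)"
  have A': "(f has_integral (1 / \<mu>) * ?J) ?S" using A e by simp
  have sub: "?S \<subseteq> {-1..1}"
  proof
    fix y assume "y \<in> ?S"
    then obtain x where x: "x \<in> {-1..1}" and y: "y = x / \<mu> + q" using mu by auto
    have "\<bar>x / \<mu>\<bar> \<le> 1 / \<mu>" using x mu by (auto simp: abs_divide divide_right_mono)
    then have "\<bar>y\<bar> \<le> 1" using hq y by linarith
    then show "y \<in> {-1..1}" by auto
  qed
  have "(1/\<mu>) * ?J = integral ?S f" using A' by (simp add: integral_unique)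
  also have "\<dots> \<le> integral {-1..1} f"
    by (rule integral_subset_le[OF sub]) (use A' fi nn in auto)
  finally have "(1/\<mu>) * ?J \<le> integral {-1..1} f" .
  then show ?thesis using mu by (simp add: field_simps)
qed

lemma scale:
  assumes mu: "\<mu> \<ge> 1"
  shows "(\<forall>j\<in>{1..i}. \<bar>c j\<bar> \<le> 2) \<Longrightarrow> U' \<ge> (1 - 1/\<mu>) * (\<Sum>j=1..i. \<bar>c j\<bar>/2) + U/\<mu>
    \<Longrightarrow> V' \<ge> (1 - 1/\<mu>) * (\<Sum>j=1..i. \<bar>c j\<bar>/2) + V/\<mu>
    \<Longrightarrow> Psi c i U V \<le> \<mu>^i * Psi c i U' V'"
proof (induction i arbitrary: U V U' V')
  case 0
  have "0 \<le> U \<Longrightarrow> 0 \<le> U/\<mu>" "0 \<le> V \<Longrightarrow> 0 \<le> V/\<mu>" using mu by auto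
  then show ?case using 0 by auto
next
  case (Suc i)
  define a where "a = c (Suc i)"
  define P where "P = (\<Sum>j=1..i. \<bar>c j\<bar>/2)"
  define q where "q = (1 - 1/\<mu>) * (a/2)"
  have w: "0 \<le> 1 - 1/\<mu>" "1/\<mu> > 0" using mu by auto
  have ab: "\<bar>a\<bar> \<le> 2" using Suc.prems(1) a_def by auto
  have sumS: "(\<Sum>j=1..Suc i. \<bar>c j\<bar>/2) = P + \<bar>a\<bar>/2" by (simp add: P_def a_def)
  have U': "U' \<ge> (1 - 1/\<mu>) * P + (1 - 1/\<mu>) * (\<bar>a\<bar>/2) + U/\<mu>"
  proof -
    have "(1 - 1/\<mu>) * (P + \<bar>a\<bar>/2) = (1 - 1/\<mu>) * P + (1 - 1/\<mu>) * (\<bar>a\<bar>/2)" by (rule distrib_left)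
    then show ?thesis using Suc.prems(2) unfolding sumS by linarith
  qed
  have V': "V' \<ge> (1 - 1/\<mu>) * P + (1 - 1/\<mu>) * (\<bar>a\<bar>/2) + V/\<mu>"
  proof -
    have "(1 - 1/\<mu>) * (P + \<bar>a\<bar>/2) = (1 - 1/\<mu>) * P + (1 - 1/\<mu>) * (\<bar>a\<bar>/2)" by (rule distrib_left)
    then show ?thesis using Suc.prems(3) unfolding sumS by linarith
  qed
  have hq: "\<bar>q\<bar> \<le> 1 - 1/\<mu>"
  proof -
    have "\<bar>q\<bar> = (1 - 1/\<mu>) * (\<bar>a\<bar>/2)" using w by (simp add: q_def abs_mult)
    also have "\<dots> \<le> (1 - 1/\<mu>) * 1" using ab w by (intro mult_left_mono) auto
    finally show ?thesis by simp
  qed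
  let ?f = "\<lambda>t. Psi c i (U' - \<bar>t\<bar>) (V' - \<bar>t - a\<bar>)"
  have pt: "Psi c i (U - \<bar>s\<bar>) (V - \<bar>s - a\<bar>) \<le> \<mu>^i * ?f (s/\<mu> + q)" for s
  proof (rule Suc.IH)
    show "\<forall>j\<in>{1..i}. \<bar>c j\<bar> \<le> 2" using Suc.prems(1) by auto
    have t1: "\<bar>s/\<mu> + q\<bar> \<le> \<bar>s\<bar>/\<mu> + (1 - 1/\<mu>) * (\<bar>a\<bar>/2)"
    proof -
      have "\<bar>s/\<mu> + q\<bar> \<le> \<bar>s/\<mu>\<bar> + \<bar>q\<bar>" by (rule abs_triangle_ineq)
      moreover have "\<bar>s/\<mu>\<bar> = \<bar>s\<bar>/\<mu>" using mu by (simp add: abs_divide)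
      moreover have "\<bar>q\<bar> = (1 - 1/\<mu>) * (\<bar>a\<bar>/2)" using w by (simp add: q_def abs_mult)
      ultimately show ?thesis by linarith
    qed
    have t2: "\<bar>s/\<mu> + q - a\<bar> \<le> \<bar>s - a\<bar>/\<mu> + (1 - 1/\<mu>) * (\<bar>a\<bar>/2)"
    proof -
      have eq: "s/\<mu> + q - a = (s - a)/\<mu> + (-q)" using mu by (simp add: q_def field_simps)
      have "\<bar>(s - a)/\<mu> + (-q)\<bar> \<le> \<bar>(s-a)/\<mu>\<bar> + \<bar>-q\<bar>" by (rule abs_triangle_ineq)
      moreover have "\<bar>(s-a)/\<mu>\<bar> = \<bar>s-a\<bar>/\<mu>" using mu by (simp add: abs_divide)
      moreover have "\<bar>-q\<bar> = (1 - 1/\<mu>) * (\<bar>a\<bar>/2)" using w by (simp add: q_def abs_mult)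
      ultimately show ?thesis using eq by linarith
    qed
    have d1: "(U - \<bar>s\<bar>)/\<mu> = U/\<mu> - \<bar>s\<bar>/\<mu>" by (simp add: diff_divide_distrib)
    have d2: "(V - \<bar>s - a\<bar>)/\<mu> = V/\<mu> - \<bar>s - a\<bar>/\<mu>" by (simp add: diff_divide_distrib)
    show "(1 - 1/\<mu>) * (\<Sum>j=1..i. \<bar>c j\<bar>/2) + (U - \<bar>s\<bar>)/\<mu> \<le> U' - \<bar>s/\<mu> + q\<bar>"
      using U' t1 d1 unfolding P_def by linarith
    show "(1 - 1/\<mu>) * (\<Sum>j=1..i. \<bar>c j\<bar>/2) + (V - \<bar>s - a\<bar>)/\<mu> \<le> V' - \<bar>s/\<mu> + q - a\<bar>"
      using V' t2 d2 unfolding P_def by linarith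
  qed
  have hi: "(\<lambda>s. ?f (s/\<mu> + q)) integrable_on {-1..1}"
    by (rule MB_integrable_on[OF MB_Psi]) auto
  have fi: "?f integrable_on {-1..1}" by (rule int_gen[OF MB_Psi])
  have hi2: "(\<lambda>s. \<mu>^i * ?f (s/\<mu> + q)) integrable_on {-1..1}"
    using integrable_on_cmult_left[OF hi, of "\<mu>^i"] by simp
  have "Psi c (Suc i) U V = integral {-1..1} (\<lambda>s. Psi c i (U - \<bar>s\<bar>) (V - \<bar>s - a\<bar>))"
    by (simp add: a_def)
  also have "\<dots> \<le> integral {-1..1} (\<lambda>s. \<mu>^i * ?f (s/\<mu> + q))"
    by (rule integral_le[OF int_gen[OF MB_Psi] hi2]) (use pt in auto)
  also have "\<dots> = \<mu>^i * integral {-1..1} (\<lambda>s. ?f (s/\<mu> + q))"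
    by (simp add: integral_mult_right)
  also have "\<dots> \<le> \<mu>^i * (\<mu> * integral {-1..1} ?f)"
    by (rule mult_left_mono[OF affine_int_le[OF mu hq hi fi Psi_nonneg]]) (use mu in auto)
  also have "\<dots> = \<mu>^Suc i * Psi c (Suc i) U' V'"
    by (simp add: a_def)
  finally show ?case .
qed



lemma pow_bound: "0 \<le> a \<Longrightarrow> real k * a \<le> 1/2 \<Longrightarrow> (1+a)^k \<le> 1 + 2 * real k * a"
proof (induction k)
  case (Suc k)
  have ka: "real k * a \<le> 1/2" using Suc.prems by (simp add: algebra_simps)
  have ih: "(1+a)^k \<le> 1 + 2 * real k * a" using Suc.IH[OF Suc.prems(1) ka] .
  have "(1+a)^Suc k = (1+a) * (1+a)^k" by simp
  also have "\<dots> \<le> (1+a) * (1 + 2 * real k * a)" using ih Suc.prems(1) by (intro mult_left_mono) auto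
  also have "\<dots> = 1 + (2 * real k + 1) * a + 2 * (real k * a) * a" by (simp add: algebra_simps)
  also have "\<dots> \<le> 1 + (2 * real k + 1) * a + a"
  proof -
    have "2 * (real k * a) * a \<le> 2 * (1/2) * a" using ka Suc.prems(1) by (intro mult_right_mono) auto
    then show ?thesis by simp
  qed
  also have "\<dots> = 1 + 2 * real (Suc k) * a" by (simp add: algebra_simps)
  finally show ?case .
qed simp

theorem mainTheorem18:
  fixes c :: "nat \<Rightarrow> real" and n :: nat and r \<delta> :: real and M :: nat
  assumes "\<forall>i\<in>{1..n}. c i \<ge> 0"
    and "0 < r" and "r \<le> 1"
    and "(\<Sum>i=1..n. \<bar>c i\<bar>) \<le> r"
    and "0 < \<delta>" and "\<delta> \<le> 1"
    and "M = nat \<lceil>4 * real n ^ 2 / \<delta>\<rceil>"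
  shows "Psi c n 1 r \<le> G c r M n 1 r \<and> G c r M n 1 r \<le> (1 + \<delta>) * Psi c n 1 r"
proof (cases "n = 0")
  case True
  then show ?thesis using assms by simp
next
  case False
  have Mge: "real M \<ge> 4 * real n ^ 2 / \<delta>" using assms(7) by linarith
  have pos: "4 * real n ^ 2 / \<delta> > 0" using False assms(5) by auto
  have Mpos: "M > 0" using Mge pos by linarith
  have key: "4 * real n ^ 2 / real M \<le> \<delta>"
  proof -
    have "4 * real n ^ 2 \<le> \<delta> * real M" using Mge assms(5) by (simp add: field_simps)
    then show ?thesis using Mpos by (simp add: field_simps)
  qed
  have low: "Psi c n 1 r \<le> G c r M n 1 r" by (rule lower[OF Mpos assms(2)])
  define x where "x = real n / real M"
  define \<mu> where "\<mu> = 1 + 2 * x"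
  have x0: "x \<ge> 0" by (simp add: x_def)
  have mu1: "\<mu> \<ge> 1" using x0 by (simp add: \<mu>_def)
  define S where "S = (\<Sum>i=1..n. \<bar>c i\<bar>)"
  have S0: "0 \<le> S" by (simp add: S_def sum_nonneg)
  have Sr: "S \<le> r" using assms(4) by (simp add: S_def)
  have sumhalf: "(\<Sum>j=1..n. \<bar>c j\<bar>/2) = S/2" by (simp add: S_def sum_divide_distrib)
  have cb: "\<forall>j\<in>{1..n}. \<bar>c j\<bar> \<le> 2"
  proof
    fix j assume j: "j \<in> {1..n}"
    have "\<bar>c j\<bar> \<le> S" unfolding S_def by (rule member_le_sum) (use j in auto)
    then show "\<bar>c j\<bar> \<le> 2" using Sr assms(3) by linarith
  qed
  have om: "1 - 1/\<mu> = 2 * x / \<mu>" using mu1 by (simp add: \<mu>_def field_simps)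
  have up: "G c r M n 1 r \<le> Psi c n (1 + real n / real M) (r + real n * r / real M)"
    using upper[OF Mpos assms(2), of c n 1 r] by simp
  have c1: "1 \<ge> (1 - 1/\<mu>) * (\<Sum>j=1..n. \<bar>c j\<bar>/2) + (1 + real n / real M)/\<mu>"
  proof -
    have "(1 - 1/\<mu>) * (S/2) + (1 + x)/\<mu> = (x * S + 1 + x) / \<mu>" unfolding om using mu1 by (simp add: field_simps)
    also have "\<dots> \<le> 1"
    proof -
      have "x * S \<le> x * 1" using x0 Sr assms(3) by (intro mult_left_mono) auto
      then show ?thesis using mu1 by (simp add: \<mu>_def field_simps)
    qed
    finally show ?thesis unfolding sumhalf x_def by simp
  qed
  have c2: "r \<ge> (1 - 1/\<mu>) * (\<Sum>j=1..n. \<bar>c j\<bar>/2) + (r + real n * r / real M)/\<mu>"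
  proof -
    have "(1 - 1/\<mu>) * (S/2) + (r + x * r)/\<mu> = (x * S + r + x * r) / \<mu>" unfolding om using mu1 by (simp add: field_simps)
    also have "\<dots> \<le> r"
    proof -
      have "x * S \<le> x * r" using x0 Sr by (intro mult_left_mono) auto
      then show ?thesis using mu1 by (simp add: \<mu>_def field_simps)
    qed
    finally show ?thesis unfolding sumhalf x_def by simp
  qed
  have sc: "Psi c n (1 + real n / real M) (r + real n * r / real M) \<le> \<mu>^n * Psi c n 1 r"
    by (rule scale[OF mu1 cb c1 c2])
  have pw: "\<mu>^n \<le> 1 + \<delta>"
  proof -
    define a where "a = 2 * real n / real M"
    have a0: "0 \<le> a" by (simp add: a_def)
    have mua: "\<mu> = 1 + a" by (simp add: \<mu>_def a_def x_def)
    have na: "real n * a = (4 * real n ^ 2 / real M) / 2" by (simp add: a_def power2_eq_square)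
    have k2: "4 * real n ^ 2 / real M / 2 \<le> \<delta> / 2" using key by simp
    have "real n * a \<le> 1/2" unfolding na using k2 assms(6) by linarith
    then have "(1+a)^n \<le> 1 + 2 * real n * a" by (rule pow_bound[OF a0])
    also have "\<dots> \<le> 1 + \<delta>" using k2 unfolding mult.assoc na by linarith
    finally show ?thesis unfolding mua .
  qed
  have "G c r M n 1 r \<le> \<mu>^n * Psi c n 1 r" using up sc by linarith
  also have "\<dots> \<le> (1 + \<delta>) * Psi c n 1 r" by (rule mult_right_mono[OF pw Psi_nonneg])
  finally show ?thesis using low by simp
qed


end
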